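(* For all integers $n\geq 2$ and $m\geq 2$: (i) $\mathrm{mbt}(K_{2n}\Box C_{2m})=\Delta(K_{2n}\Box C_{2m})+1=2n+2$; (ii) $\mathrm{mbt}(K_{2n+1}\Box C_{2m})=\Delta(K_{2n+1}\Box C_{2m})+1=2n+3$.
   Context: A book embedding of a graph $G$ consists of a linear ordering of $V(G)$ (the vertices placed on the spine) together with an assignment of each edge to one of a set of pages such that no two edges on the same page cross, i.e. there are no two edges $uv$, $xy$ on the same page with $u<x<v<y$ in the ordering. A book embedding is matching if on every page each vertex is incident with at most one edge of that page. The matching book thickness $\mathrm{mbt}(G)$ is the minimum number of pages over all matching book embeddings of $G$. $\Delta(G)$ denotes the maximum degree of $G$. $K_r$ is the complete graph on $r$ vertices, $C_s$ the cycle on $s$ vertices. The Cartesian product $G\Box B$ has vertex set $V(G)\times V(B)$, with $(u_1,v_1)$ adjacent to $(u_2,v_2)$ iff either $u_1=u_2$ and $v_1v_2\in E(B)$, or $v_1=v_2$ and $u_1u_2\in E(G)$. *)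

theory Defs
  imports Main
begin

type_synonym 'a graph = "'a set \<times> 'a set set"

definition verts :: "'a graph \<Rightarrow> 'a set" where "verts G = fst G"
definition edges :: "'a graph \<Rightarrow> 'a set set" where "edges G = snd G"

definition degree :: "'a graph \<Rightarrow> 'a \<Rightarrow> nat" where
  "degree G v = card {e \<in> edges G. v \<in> e}"

definition max_degree :: "'a graph \<Rightarrow> nat" where
  "max_degree G = Max (degree G ` verts G)"

definition matching_book_embedding ::
  "'a graph \<Rightarrow> nat \<Rightarrow> ('a \<Rightarrow> nat) \<Rightarrow> ('a set \<Rightarrow> nat) \<Rightarrow> bool" where
  "matching_book_embedding G k pos pg \<longleftrightarrow>
     inj_on pos (verts G) \<and>
     (\<forall>e \<in> edges G. pg e < k) \<and>
     (\<forall>e \<in> edges G. \<forall>e' \<in> edges G. \<forall>u v x y.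
        pg e = pg e' \<and> e = {u, v} \<and> e' = {x, y} \<longrightarrow>
        \<not> (pos u < pos x \<and> pos x < pos v \<and> pos v < pos y)) \<and>
     (\<forall>e \<in> edges G. \<forall>e' \<in> edges G. e \<noteq> e' \<and> pg e = pg e' \<longrightarrow> e \<inter> e' = {})"

definition mbt :: "'a graph \<Rightarrow> nat" where
  "mbt G = (LEAST k. \<exists>pos pg. matching_book_embedding G k pos pg)"

definition complete_graph :: "nat \<Rightarrow> nat graph" where
  "complete_graph r = ({0..<r}, {{i, j} | i j. i < r \<and> j < r \<and> i \<noteq> j})"

definition cycle_graph :: "nat \<Rightarrow> nat graph" where
  "cycle_graph s = ({0..<s}, {{i, (i + 1) mod s} | i. i < s})"

definition cart_prod :: "'a graph \<Rightarrow> 'b graph \<Rightarrow> ('a \<times> 'b) graph" (infixr "\<box>" 80) where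
  "cart_prod G B = (verts G \<times> verts B,
     {{(u1, v), (u2, v)} | u1 u2 v. {u1, u2} \<in> edges G \<and> v \<in> verts B} \<union>
     {{(u, v1), (u, v2)} | u v1 v2. u \<in> verts G \<and> {v1, v2} \<in> edges B})"

end

theory Submission
  imports Defs
begin


lemma parity_gen:
  fixes G :: "'a graph" and pos :: "'a \<Rightarrow> nat"
  assumes fin: "finite (verts G)"
  and two: "\<forall>e\<in>edges G. \<exists>c d. c \<noteq> d \<and> c \<in> verts G \<and> d \<in> verts G \<and> e = {c,d}"
  and mbe: "matching_book_embedding G k pos pg"
  and cover: "\<forall>x\<in>verts G. \<exists>e\<in>edges G. x \<in> e \<and> pg e = pg {a,b}"
  and ab: "{a,b} \<in> edges G" "pos a < pos b" "a \<in> verts G" "b \<in> verts G"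
  shows "odd (card {w\<in>verts G. pos w < pos a} + card {w\<in>verts G. pos w < pos b})"
proof -
  let ?V = "verts G" and ?E = "edges G" and ?p = "pg {a,b}"
  have inj: "inj_on pos ?V" using mbe unfolding matching_book_embedding_def by blast
  have cross: "\<And>e e' u v x y. e \<in> ?E \<Longrightarrow> e' \<in> ?E \<Longrightarrow> pg e = pg e' \<Longrightarrow> e = {u,v} \<Longrightarrow> e' = {x,y}
      \<Longrightarrow> \<not> (pos u < pos x \<and> pos x < pos v \<and> pos v < pos y)"
    using mbe unfolding matching_book_embedding_def by blast
  have match: "\<And>e e'. e \<in> ?E \<Longrightarrow> e' \<in> ?E \<Longrightarrow> e \<noteq> e' \<Longrightarrow> pg e = pg e' \<Longrightarrow> e \<inter> e' = {}"
    using mbe unfolding matching_book_embedding_def by blast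
  define S where "S = {y\<in>?V. pos a < pos y \<and> pos y < pos b}"
  define Ep where "Ep = {e\<in>?E. pg e = ?p \<and> e \<subseteq> S}"
  have finS: "finite S" using fin unfolding S_def by simp
  have U: "\<Union>Ep = S"
  proof
    show "\<Union>Ep \<subseteq> S" unfolding Ep_def by blast
    show "S \<subseteq> \<Union>Ep"
    proof
      fix y assume yS: "y \<in> S"
      then have yV: "y \<in> ?V" and ya: "pos a < pos y" and yb: "pos y < pos b" unfolding S_def by auto
      obtain e where e: "e \<in> ?E" "y \<in> e" "pg e = ?p" using cover yV by blast
      obtain c d where cd: "c \<noteq> d" "c \<in> ?V" "d \<in> ?V" "e = {c,d}" using two e(1) by blast
      have "\<exists>z. e = {z,y} \<and> z \<in> ?V \<and> z \<noteq> y"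
      proof (cases "y = c")
        case True then show ?thesis using cd by (intro exI[of _ d]) (auto simp: insert_commute)
      next
        case False then have "y = d" using cd e(2) by blast
        then show ?thesis using cd by (intro exI[of _ c]) auto
      qed
      then obtain z where z: "e = {z,y}" "z \<in> ?V" "z \<noteq> y" by blast
      have "y \<noteq> a" "y \<noteq> b" using ya yb by auto
      have za: "z \<noteq> a"
      proof
        assume "z = a"
        then have "e \<noteq> {a,b}" using z \<open>y \<noteq> b\<close> \<open>y\<noteq>a\<close> by (auto simp: doubleton_eq_iff)
        then have "e \<inter> {a,b} = {}" using match[OF e(1) ab(1)] e(3) by blast
        then show False using z \<open>z = a\<close> by auto
      qed
      have zb: "z \<noteq> b"
      proof
        assume "z = b"
        then have "e \<noteq> {a,b}" using z \<open>y \<noteq> b\<close> \<open>y\<noteq>a\<close> by (auto simp: doubleton_eq_iff)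
        then have "e \<inter> {a,b} = {}" using match[OF e(1) ab(1)] e(3) by blast
        then show False using z \<open>z = b\<close> by auto
      qed
      have "pos z \<noteq> pos a" using inj za z(2) ab(3) by (meson inj_on_eq_iff)
      moreover have "pos z \<noteq> pos b" using inj zb z(2) ab(4) by (meson inj_on_eq_iff)
      moreover have "\<not> (pos z < pos a \<and> pos a < pos y \<and> pos y < pos b)"
        using cross[OF e(1) ab(1) e(3) z(1) refl] .
      moreover have "\<not> (pos a < pos y \<and> pos y < pos b \<and> pos b < pos z)"
        using cross[OF ab(1) e(1) e(3)[symmetric] refl, of y z] z(1) by (simp add: insert_commute)
      ultimately have "pos a < pos z" "pos z < pos b" using ya yb by auto
      then have "z \<in> S" using z(2) unfolding S_def by auto
      then have "e \<in> Ep" using e yS z(1) unfolding Ep_def by auto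
      then show "y \<in> \<Union>Ep" using e(2) by blast
    qed
  qed
  have finEp: "finite Ep"
  proof (rule finite_subset)
    show "Ep \<subseteq> Pow S" unfolding Ep_def by auto
    show "finite (Pow S)" using finS by simp
  qed
  have disj: "pairwise disjnt Ep"
  proof (rule pairwiseI)
    fix e e' assume "e \<in> Ep" "e' \<in> Ep" "e \<noteq> e'"
    then have "e \<in> ?E" "e' \<in> ?E" "pg e = pg e'" unfolding Ep_def by auto
    then show "disjnt e e'" unfolding disjnt_def using match \<open>e \<noteq> e'\<close> by blast
  qed
  have c2: "\<And>e. e \<in> Ep \<Longrightarrow> card e = 2"
  proof -
    fix e assume "e \<in> Ep"
    then have "e \<in> ?E" unfolding Ep_def by auto
    then obtain c d where "c \<noteq> d" "e = {c,d}" using two by blast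
    then show "card e = 2" by simp
  qed
  have finm: "\<And>A. A \<in> Ep \<Longrightarrow> finite A" using finS unfolding Ep_def by (auto intro: finite_subset)
  have "card S = sum card Ep"
    using card_Union_disjoint[OF disj finm] U by simp
  also have "\<dots> = sum (\<lambda>_. 2) Ep" using c2 by (rule sum.cong[OF refl])
  also have "\<dots> = 2 * card Ep" by simp
  finally have evS: "even (card S)" by simp
  let ?A = "{w\<in>?V. pos w < pos a}"
  have B: "{w\<in>?V. pos w < pos b} = ?A \<union> insert a S"
  proof
    show "{w\<in>?V. pos w < pos b} \<subseteq> ?A \<union> insert a S"
    proof
      fix w assume w: "w \<in> {w\<in>?V. pos w < pos b}"
      show "w \<in> ?A \<union> insert a S"
      proof (cases "pos w = pos a")
        case True then have "w = a" using inj w ab(3) by (auto dest: inj_onD)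
        then show ?thesis by simp
      next
        case False then show ?thesis using w unfolding S_def by auto
      qed
    qed
    show "?A \<union> insert a S \<subseteq> {w\<in>?V. pos w < pos b}" using ab unfolding S_def by auto
  qed
  have "card {w\<in>?V. pos w < pos b} = card ?A + card (insert a S)"
    unfolding B by (rule card_Un_disjoint) (use fin finS in \<open>auto simp: S_def\<close>)
  also have "card (insert a S) = card S + 1" using finS by (simp add: S_def)
  finally show ?thesis using evS by simp
qed



locale KC =
  fixes r m :: nat
  assumes r3: "r \<ge> 3" and m2: "m \<ge> 2"
begin

abbreviation "G \<equiv> complete_graph r \<box> cycle_graph (2*m)"
abbreviation "V \<equiv> {0..<r} \<times> {0..<2*m}"

definition Hd :: "nat \<Rightarrow> nat \<Rightarrow> nat \<Rightarrow> (nat\<times>nat) set" where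
  "Hd a b v = {(a,v),(b,v)}"
definition Cd :: "nat \<Rightarrow> nat \<Rightarrow> (nat\<times>nat) set" where
  "Cd u i = {(u,i),(u,(i+1) mod (2*m))}"

lemma verts_G: "verts G = V"
  by (simp add: cart_prod_def verts_def complete_graph_def cycle_graph_def)

lemma edges_G: "e \<in> edges G \<longleftrightarrow>
   (\<exists>a b v. a < r \<and> b < r \<and> a \<noteq> b \<and> v < 2*m \<and> e = Hd a b v) \<or>
   (\<exists>u i. u < r \<and> i < 2*m \<and> e = Cd u i)"
proof
  assume "e \<in> edges G"
  then consider (H) u1 u2 v where "e = {(u1, v), (u2, v)}" "{u1, u2} \<in> edges (complete_graph r)" "v \<in> verts (cycle_graph (2*m))"
    | (C) u v1 v2 where "e = {(u, v1), (u, v2)}" "u \<in> verts (complete_graph r)" "{v1, v2} \<in> edges (cycle_graph (2*m))"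
    unfolding cart_prod_def edges_def by auto
  then show "(\<exists>a b v. a < r \<and> b < r \<and> a \<noteq> b \<and> v < 2*m \<and> e = Hd a b v) \<or>
   (\<exists>u i. u < r \<and> i < 2*m \<and> e = Cd u i)"
  proof cases
    case H
    then obtain i j where "{u1,u2} = {i,j}" "i<r" "j<r" "i\<noteq>j"
      by (auto simp: complete_graph_def edges_def)
    then have "u1 < r" "u2 < r" "u1 \<noteq> u2" by (auto simp: doubleton_eq_iff)
    then show ?thesis using H by (auto simp: Hd_def cycle_graph_def verts_def)
  next
    case C
    then obtain i where "{v1,v2} = {i,(i+1) mod (2*m)}" "i < 2*m"
      by (auto simp: cycle_graph_def edges_def)
    then have "e = Cd u i" using C by (auto simp: Cd_def doubleton_eq_iff)
    then show ?thesis using C \<open>i<2*m\<close> by (auto simp: complete_graph_def verts_def)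
  qed
next
  assume "(\<exists>a b v. a < r \<and> b < r \<and> a \<noteq> b \<and> v < 2*m \<and> e = Hd a b v) \<or>
   (\<exists>u i. u < r \<and> i < 2*m \<and> e = Cd u i)"
  then show "e \<in> edges G"
  proof
    assume "\<exists>a b v. a < r \<and> b < r \<and> a \<noteq> b \<and> v < 2*m \<and> e = Hd a b v"
    then obtain a b v where "a < r" "b < r" "a \<noteq> b" "v < 2*m" "e = Hd a b v" by blast
    moreover have "{a,b} \<in> edges (complete_graph r)" using calculation
      by (auto simp: complete_graph_def edges_def)
    ultimately show ?thesis
      by (auto simp: cart_prod_def edges_def Hd_def cycle_graph_def verts_def)
  next
    assume "\<exists>u i. u < r \<and> i < 2*m \<and> e = Cd u i"
    then obtain u i where "u < r" "i < 2*m" "e = Cd u i" by blast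
    moreover have "{i, (i+1) mod (2*m)} \<in> edges (cycle_graph (2*m))" using calculation
      by (auto simp: cycle_graph_def edges_def)
    ultimately show ?thesis
      by (auto simp: cart_prod_def edges_def Cd_def complete_graph_def verts_def)
  qed
qed


lemma sucmod: "i < 2*m \<Longrightarrow> (i+1) mod (2*m) = (if i+1 = 2*m then 0 else i+1)"
  by auto

lemma predmod: "v < 2*m \<Longrightarrow> (v + 2*m - 1) mod (2*m) = (if v = 0 then 2*m-1 else v - 1)"
proof -
  assume "v < 2*m"
  show ?thesis
  proof (cases "v = 0")
    case True then show ?thesis using m2 by simp
  next
    case False
    then have eq: "v + 2*m - 1 = (v - 1) + 2*m" by simp
    have "(v + 2*m - 1) mod (2*m) = (v - 1) mod (2*m)" unfolding eq by (rule mod_add_self2)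
    then show ?thesis using False \<open>v<2*m\<close> by simp
  qed
qed

definition posf :: "nat\<times>nat \<Rightarrow> nat" where
  "posf x = snd x * r + (if even (snd x) then fst x else r - 1 - fst x)"

definition pgf :: "(nat\<times>nat) set \<Rightarrow> nat" where
  "pgf e = (if card (snd ` e) = 1 then (\<Sum>x\<in>e. fst x) mod r
            else r + (if snd ` e = {0, 2*m-1} then 1 else Min (snd ` e) mod 2))"

lemma pg_H: "a \<noteq> b \<Longrightarrow> pgf (Hd a b v) = (a+b) mod r"
  by (simp add: pgf_def Hd_def)

lemma pg_C: "i < 2*m \<Longrightarrow> pgf (Cd u i) = r + i mod 2"
proof -
  assume i: "i < 2*m"
  show ?thesis
  proof (cases "i + 1 = 2*m")
    case True
    then have "snd ` Cd u i = {0, 2*m-1}" by (auto simp: Cd_def)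
    moreover have "card {0::nat, 2*m-1} = 2" using m2 by simp
    moreover have "i mod 2 = 1" using True by presburger
    ultimately show ?thesis by (simp add: pgf_def)
  next
    case False
    then have s: "snd ` Cd u i = {i, i+1}" using i by (auto simp: Cd_def)
    moreover have "{i, i+1} \<noteq> {0, 2*m-1}" using m2 False by (auto simp: doubleton_eq_iff)
    ultimately show ?thesis by (simp add: pgf_def)
  qed
qed

lemma pos_block: "u < r \<Longrightarrow> v*r \<le> posf (u,v) \<and> posf (u,v) < v*r + r"
  by (auto simp: posf_def)

lemma mult_step: "(a::nat) + k \<le> b \<Longrightarrow> a*r + k*r \<le> b*r"
  by (metis add_mult_distrib mult_le_mono1)

lemma pos_inj: "inj_on posf V"
proof (rule inj_onI)
  fix x y assume x: "x \<in> V" and y: "y \<in> V" and eq: "posf x = posf y"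
  obtain u v where xu: "x = (u,v)" "u < r" using x by auto
  obtain u' v' where yu: "y = (u',v')" "u' < r" using y by auto
  have b1: "v*r \<le> posf x" "posf x < v*r + r" using pos_block[OF xu(2)] xu by auto
  have b2: "v'*r \<le> posf y" "posf y < v'*r + r" using pos_block[OF yu(2)] yu by auto
  have "v = v'"
  proof (rule ccontr)
    assume "v \<noteq> v'"
    then have "v + 1 \<le> v' \<or> v' + 1 \<le> v" by arith
    then show False using mult_step[of v 1 v'] mult_step[of v' 1 v] b1 b2 eq by auto
  qed
  then have "u = u'" using eq xu yu by (auto simp: posf_def split: if_splits)
  then show "x = y" using xu yu \<open>v = v'\<close> by simp
qed

lemma modlem: "(a::nat) < b \<Longrightarrow> b < a + r \<Longrightarrow> a mod r \<noteq> b mod r"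
proof
  assume "a < b" "b < a + r" "a mod r = b mod r"
  then have "r dvd (b - a)" using mod_eq_dvd_iff_nat[of a b r] by auto
  moreover have "0 < b - a" "b - a < r" using \<open>a<b\<close> \<open>b < a+r\<close> by auto
  ultimately show False using dvd_imp_le by fastforce
qed

lemma C_pos:
  assumes "u < r" "i < 2*m" "{p,q} = Cd u i"
  shows "(i+1 < 2*m \<and> posf p + posf q + 1 = 2*(i*r)+2*r \<and> i*r \<le> posf p \<and> posf p < i*r+2*r
            \<and> i*r \<le> posf q \<and> posf q < i*r+2*r)
       \<or> (i = 2*m-1 \<and> posf p + posf q + 1 = i*r + r \<and>
            (posf p < r \<and> i*r \<le> posf q \<or> posf q < r \<and> i*r \<le> posf p))"
proof (cases "i+1 < 2*m")
  case True
  then have pq: "p = (u,i) \<and> q = (u,i+1) \<or> p = (u,i+1) \<and> q = (u,i)"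
    using assms(3) by (auto simp: Cd_def doubleton_eq_iff)
  have "posf (u,i) + posf (u,i+1) + 1 = 2*(i*r)+2*r"
    using assms(1) by (auto simp: posf_def)
  moreover have "i*r \<le> posf (u,i)" "posf (u,i) < i*r+2*r"
     "i*r \<le> posf (u,i+1)" "posf (u,i+1) < i*r+2*r"
    using pos_block[OF assms(1), of i] pos_block[OF assms(1), of "i+1"] by auto
  ultimately show ?thesis using pq True by auto
next
  case False
  then have i: "i = 2*m-1" using assms(2) by simp
  then have pq: "p = (u,i) \<and> q = (u,0) \<or> p = (u,0) \<and> q = (u,i)"
    using assms(3) m2 by (auto simp: Cd_def doubleton_eq_iff)
  have oi: "odd i" using i m2 by presburger
  have "posf (u,i) + posf (u,0) + 1 = i*r + r" "posf (u,0) < r" "i*r \<le> posf (u,i)"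
    using assms(1) oi by (auto simp: posf_def)
  then show ?thesis using pq i by auto
qed

lemma H_pos:
  assumes "a < r" "b < r" "{p,q} = Hd a b v"
  obtains a1 a2 where "p = (a1,v)" "q = (a2,v)" "a1 < r" "a2 < r" "a1 + a2 = a + b"
  using assms by (auto simp: Hd_def doubleton_eq_iff)

lemma H_other:
  assumes "a < r" "b < r" "a \<noteq> b" "z \<in> Hd a b v"
  shows "\<exists>d. d < r \<and> d \<noteq> fst z \<and> snd z = v \<and> Hd a b v = Hd (fst z) d v \<and> a + b = fst z + d"
  using assms by (auto simp: Hd_def insert_commute)

lemma modcancel: "(c + d) mod r = (c + d') mod r \<Longrightarrow> d < r \<Longrightarrow> d' < r \<Longrightarrow> d = d'"
proof (rule ccontr)
  assume h: "(c + d) mod r = (c + d') mod r" "d < r" "d' < r" "d \<noteq> d'"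
  then have "d < d' \<or> d' < d" by arith
  then show False using modlem[of "c+d" "c+d'"] modlem[of "c+d'" "c+d"] h by auto
qed

lemma C_mem: "z \<in> Cd u i \<Longrightarrow> fst z = u \<and> (snd z = i \<or> snd z = (i+1) mod (2*m))"
  by (auto simp: Cd_def)

lemma C_share:
  assumes "i < 2*m" "i' < 2*m" "i mod 2 = i' mod 2" "s = i \<or> s = (i+1) mod (2*m)"
    "s = i' \<or> s = (i'+1) mod (2*m)"
  shows "i = i'"
proof -
  have o: "odd (2*m-1)" using m2 by presburger
  have "(i+1) mod (2*m) = (if i+1 = 2*m then 0 else i+1)" "(i'+1) mod (2*m) = (if i'+1 = 2*m then 0 else i'+1)"
    using sucmod assms(1,2) by auto
  moreover have "i + 1 = 2*m \<Longrightarrow> odd i" "i' + 1 = 2*m \<Longrightarrow> odd i'" by presburger+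
  moreover have "\<And>k::nat. Suc k mod 2 \<noteq> k mod 2" "\<And>k::nat. k mod 2 \<noteq> Suc k mod 2" by presburger+
  ultimately show ?thesis using assms(3-5)
    by (auto split: if_splits simp: odd_iff_mod_2_eq_one)
qed

lemma emb: "matching_book_embedding G (r+2) posf pgf"
  unfolding matching_book_embedding_def
proof (intro conjI)
  show "inj_on posf (verts G)" using pos_inj verts_G by simp
  show "\<forall>e\<in>edges G. pgf e < r + 2"
  proof
    fix e assume "e \<in> edges G"
    then consider (H) a b v where "a \<noteq> b" "e = Hd a b v" | (C) u i where "i < 2*m" "e = Cd u i"
      unfolding edges_G by blast
    then show "pgf e < r+2"
    proof cases
      case H
      have "(a+b) mod r < r" using r3 by simp
      then show ?thesis using H by (simp add: pg_H)
    next
      case C then show ?thesis by (simp add: pg_C)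
    qed
  qed
  show "\<forall>e\<in>edges G. \<forall>e'\<in>edges G. \<forall>p q x y. pgf e = pgf e' \<and> e = {p, q} \<and> e' = {x, y} \<longrightarrow>
       \<not> (posf p < posf x \<and> posf x < posf q \<and> posf q < posf y)"
  proof (intro ballI allI impI notI)
    fix e e' p q x y
    assume e: "e \<in> edges G" and e': "e' \<in> edges G"
      and h: "pgf e = pgf e' \<and> e = {p, q} \<and> e' = {x, y}"
      and cr: "posf p < posf x \<and> posf x < posf q \<and> posf q < posf y"
    from e consider (H) a b v where "a < r" "b < r" "a \<noteq> b" "v < 2*m" "e = Hd a b v"
      | (C) u i where "u < r" "i < 2*m" "e = Cd u i" unfolding edges_G by blast
    then show False
    proof cases
      case H
      from e' consider (H') a' b' v' where "a' < r" "b' < r" "a' \<noteq> b'" "v' < 2*m" "e' = Hd a' b' v'"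
        | (C') u' i' where "u' < r" "i' < 2*m" "e' = Cd u' i'" unfolding edges_G by blast
      then show False
      proof cases
        case H'
        have pg: "(a+b) mod r = (a'+b') mod r" using h H H' by (simp add: pg_H)
        obtain a1 a2 where A: "p = (a1,v)" "q = (a2,v)" "a1 < r" "a2 < r" "a1 + a2 = a + b"
          using H_pos[of a b p q v] H h by auto
        obtain c1 c2 where B: "x = (c1,v')" "y = (c2,v')" "c1 < r" "c2 < r" "c1 + c2 = a' + b'"
          using H_pos[of a' b' x y v'] H' h by auto
        have bl: "v*r \<le> posf p" "posf q < v*r + r" "v'*r \<le> posf x" "posf x < v'*r + r"
          using pos_block[OF A(3), of v] pos_block[OF A(4), of v]
            pos_block[OF B(3), of v'] A B by auto
        have "v = v'"
        proof (rule ccontr)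
          assume "v \<noteq> v'"
          then have "v + 1 \<le> v' \<or> v' + 1 \<le> v" by arith
          then show False using mult_step[of v 1 v'] mult_step[of v' 1 v] bl cr by auto
        qed
        show False
        proof (cases "even v")
          case True
          then have "a1 < c1" "c1 < a2" "a2 < c2" using cr A B \<open>v = v'\<close> by (auto simp: posf_def)
          then show False using modlem[of "a1+a2" "c1+c2"] A B pg by auto
        next
          case False
          then have "c1 < a1" "a2 < c1" "c2 < a2" using cr A B \<open>v = v'\<close> by (auto simp: posf_def)
          then show False using modlem[of "c1+c2" "a1+a2"] A B pg by auto
        qed
      next
        case C'
        have "(a+b) mod r < r" using r3 by simp
        then have "pgf e < r" "pgf e' \<ge> r" using H C' by (auto simp: pg_H pg_C)
        moreover have "pgf e = pgf e'" using h by blast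
        ultimately show False by linarith
      qed
    next
      case C
      from e' consider (H') a' b' v' where "a' < r" "b' < r" "a' \<noteq> b'" "v' < 2*m" "e' = Hd a' b' v'"
        | (C') u' i' where "u' < r" "i' < 2*m" "e' = Cd u' i'" unfolding edges_G by blast
      then show False
      proof cases
        case H'
        have "(a'+b') mod r < r" using r3 by simp
        then have "pgf e' < r" "pgf e \<ge> r" using H' C by (auto simp: pg_H pg_C)
        moreover have "pgf e = pgf e'" using h by blast
        ultimately show False by linarith
      next
        case C'
        have par: "i mod 2 = i' mod 2" using h C C' by (simp add: pg_C)
        have P: "(i+1 < 2*m \<and> posf p + posf q + 1 = 2*(i*r)+2*r \<and> i*r \<le> posf p \<and> posf p < i*r+2*r
            \<and> i*r \<le> posf q \<and> posf q < i*r+2*r)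
          \<or> (i = 2*m-1 \<and> posf p + posf q + 1 = i*r + r \<and>
            (posf p < r \<and> i*r \<le> posf q \<or> posf q < r \<and> i*r \<le> posf p))"
          using C_pos[of u i p q] C h by auto
        have Q: "(i'+1 < 2*m \<and> posf x + posf y + 1 = 2*(i'*r)+2*r \<and> i'*r \<le> posf x \<and> posf x < i'*r+2*r
            \<and> i'*r \<le> posf y \<and> posf y < i'*r+2*r)
          \<or> (i' = 2*m-1 \<and> posf x + posf y + 1 = i'*r + r \<and>
            (posf x < r \<and> i'*r \<le> posf y \<or> posf y < r \<and> i'*r \<le> posf x))"
          using C_pos[of u' i' x y] C' h by auto
        have o: "odd (2*m-1)" using m2 by presburger
        have ii: "i = i' \<or> i + 2 \<le> i' \<or> i' + 2 \<le> i" using par by presburger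
        have m1: "i + 2 \<le> i' \<Longrightarrow> i*r + 2*r \<le> i'*r" "i' + 2 \<le> i \<Longrightarrow> i'*r + 2*r \<le> i*r"
          using mult_step[of i 2 i'] mult_step[of i' 2 i] by auto
        have r1: "1 \<le> i \<Longrightarrow> r \<le> i*r" "1 \<le> i' \<Longrightarrow> r \<le> i'*r" by simp_all
        have P1: "posf p + posf q + 1 = 2*(i*r)+2*r \<and> i*r \<le> posf p \<and> posf p < i*r+2*r
            \<and> i*r \<le> posf q \<and> posf q < i*r+2*r" if "i+1 < 2*m" using P that by auto
        have P2: "posf p + posf q + 1 = i*r + r \<and>
            (posf p < r \<and> i*r \<le> posf q \<or> posf q < r \<and> i*r \<le> posf p)" if "\<not> i+1 < 2*m"
          using P that by auto
        have Q1: "posf x + posf y + 1 = 2*(i'*r)+2*r \<and> i'*r \<le> posf x \<and> posf x < i'*r+2*r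
            \<and> i'*r \<le> posf y \<and> posf y < i'*r+2*r" if "i'+1 < 2*m" using Q that by auto
        have Q2: "posf x + posf y + 1 = i'*r + r \<and>
            (posf x < r \<and> i'*r \<le> posf y \<or> posf y < r \<and> i'*r \<le> posf x)" if "\<not> i'+1 < 2*m"
          using Q that by auto
        show False
        proof (cases "i+1 < 2*m")
          case T1: True
          note A = P1[OF T1]
          show False
          proof (cases "i'+1 < 2*m")
            case T2: True
            note B = Q1[OF T2]
            show False using ii
            proof (elim disjE)
              assume "i = i'" then show False using A B cr by simp
            next
              assume "i + 2 \<le> i'" then have "i*r + 2*r \<le> i'*r" by (rule m1)
              then show False using A B cr by linarith
            next
              assume "i' + 2 \<le> i" then have "i'*r + 2*r \<le> i*r" by (rule m1)
              then show False using A B cr by linarith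
            qed
          next
            case F2: False
            note B = Q2[OF F2]
            have i1: "i' = 2*m-1" using C' F2 by simp
            have "odd i'" using i1 o by simp
            then have oi: "odd i" using par by (metis odd_iff_mod_2_eq_one)
            have "i \<noteq> 2*m-2"
            proof
              assume "i = 2*m-2"
              then have "i = 2*(m-1)" by simp
              then show False using oi by simp
            qed
            moreover have "i \<noteq> 0" using oi by (metis even_zero)
            ultimately have "i + 2 \<le> i'" "1 \<le> i" using T1 i1 by auto
            then have "i*r + 2*r \<le> i'*r" "r \<le> i*r" using m1 r1 by auto
            then show False using A B cr by linarith
          qed
        next
          case F1: False
          note A = P2[OF F1]
          have i1: "i = 2*m-1" using C F1 by simp
          show False
          proof (cases "i'+1 < 2*m")
            case T2: True
            note B = Q1[OF T2]
            have "odd i" using i1 o by simp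
            then have oi: "odd i'" using par by (metis odd_iff_mod_2_eq_one)
            have "i' \<noteq> 2*m-2"
            proof
              assume "i' = 2*m-2"
              then have "i' = 2*(m-1)" by simp
              then show False using oi by simp
            qed
            moreover have "i' \<noteq> 0" using oi by (metis even_zero)
            ultimately have "i' + 2 \<le> i" "1 \<le> i'" using T2 i1 by auto
            then have "i'*r + 2*r \<le> i*r" "r \<le> i'*r" using m1 r1 by auto
            then show False using A B cr by linarith
          next
            case F2: False
            note B = Q2[OF F2]
            have "i' = 2*m-1" using C' F2 by simp
            then show False using A B cr i1 by simp
          qed
        qed
      qed
    qed
  qed
  show "\<forall>e\<in>edges G. \<forall>e'\<in>edges G. e \<noteq> e' \<and> pgf e = pgf e' \<longrightarrow> e \<inter> e' = {}"
  proof (intro ballI impI)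
    fix e e' assume e: "e \<in> edges G" and e': "e' \<in> edges G" and h: "e \<noteq> e' \<and> pgf e = pgf e'"
    show "e \<inter> e' = {}"
    proof (rule ccontr)
      assume "e \<inter> e' \<noteq> {}"
      then obtain z where z: "z \<in> e" "z \<in> e'" by blast
      from e consider (H) a b v where "a < r" "b < r" "a \<noteq> b" "v < 2*m" "e = Hd a b v"
        | (C) u i where "u < r" "i < 2*m" "e = Cd u i" unfolding edges_G by blast
      then show False
      proof cases
        case H
        from e' consider (H') a' b' v' where "a' < r" "b' < r" "a' \<noteq> b'" "v' < 2*m" "e' = Hd a' b' v'"
          | (C') u' i' where "u' < r" "i' < 2*m" "e' = Cd u' i'" unfolding edges_G by blast
        then show False
        proof cases
          case H'
          obtain d where d: "d < r" "d \<noteq> fst z" "snd z = v" "Hd a b v = Hd (fst z) d v" "a + b = fst z + d"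
            using H_other[of a b z v] H z by blast
          obtain d' where d': "d' < r" "d' \<noteq> fst z" "snd z = v'" "Hd a' b' v' = Hd (fst z) d' v'" "a' + b' = fst z + d'"
            using H_other[of a' b' z v'] H' z by blast
          have "(fst z + d) mod r = (fst z + d') mod r" using h H H' d d' by (simp add: pg_H)
          then have "d = d'" using modcancel d d' by blast
          then have "e = e'" using H H' d d' by simp
          then show False using h by simp
        next
          case C'
          have "(a+b) mod r < r" using r3 by simp
          then have "pgf e < r" "pgf e' \<ge> r" using H C' by (auto simp: pg_H pg_C)
          moreover have "pgf e = pgf e'" using h by blast
          ultimately show False by linarith
        qed
      next
        case C
        from e' consider (H') a' b' v' where "a' < r" "b' < r" "a' \<noteq> b'" "v' < 2*m" "e' = Hd a' b' v'"
          | (C') u' i' where "u' < r" "i' < 2*m" "e' = Cd u' i'" unfolding edges_G by blast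
        then show False
        proof cases
          case H'
          have "(a'+b') mod r < r" using r3 by simp
          then have "pgf e' < r" "pgf e \<ge> r" using H' C by (auto simp: pg_H pg_C)
          moreover have "pgf e = pgf e'" using h by blast
          ultimately show False by linarith
        next
          case C'
          have par: "i mod 2 = i' mod 2" using h C C' by (simp add: pg_C)
          have z1: "fst z = u \<and> (snd z = i \<or> snd z = (i+1) mod (2*m))" using C_mem C z by blast
          have z2: "fst z = u' \<and> (snd z = i' \<or> snd z = (i'+1) mod (2*m))" using C_mem C' z by blast
          have "i = i'" using C_share[OF C(2) C'(2) par] z1 z2 by blast
          moreover have "u = u'" using z1 z2 by simp
          ultimately have "e = e'" using C C' by simp
          then show False using h by simp
        qed
      qed
    qed
  qed
qed

end


context KC begin

lemma nb_facts:
  assumes v: "v < 2*m"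
  shows "(v+1) mod (2*m) \<noteq> v" "(v + 2*m - 1) mod (2*m) \<noteq> v"
    "(v+1) mod (2*m) \<noteq> (v + 2*m - 1) mod (2*m)"
    "((v + 2*m - 1) mod (2*m) + 1) mod (2*m) = v"
    "(v + 2*m - 1) mod (2*m) < 2*m"
  using sucmod[OF v] predmod[OF v] m2 v by (auto simp: sucmod)

lemma pred_of_suc:
  assumes i: "i < 2*m" shows "((i+1) mod (2*m) + 2*m - 1) mod (2*m) = i"
proof -
  have "(i+1) mod (2*m) < 2*m" using m2 by simp
  then show ?thesis using predmod[of "(i+1) mod (2*m)"] sucmod[OF i] i by (auto split: if_splits)
qed

lemma inc_eq:
  assumes u: "u < r" and v: "v < 2*m"
  shows "{e \<in> edges G. (u,v) \<in> e} =
     (\<lambda>b. Hd u b v) ` ({0..<r} - {u}) \<union> {Cd u v, Cd u ((v + 2*m - 1) mod (2*m))}"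
    (is "?L = ?R")
proof
  show "?L \<subseteq> ?R"
  proof
    fix e assume "e \<in> ?L"
    then have e: "e \<in> edges G" "(u,v) \<in> e" by auto
    from e(1) consider (H) a b v' where "a < r" "b < r" "a \<noteq> b" "v' < 2*m" "e = Hd a b v'"
      | (C) u' i where "u' < r" "i < 2*m" "e = Cd u' i" unfolding edges_G by blast
    then show "e \<in> ?R"
    proof cases
      case H
      then have "v' = v" "u = a \<or> u = b" using e(2) by (auto simp: Hd_def)
      then show ?thesis using H by (auto simp: Hd_def insert_commute)
    next
      case C
      then have uu: "u' = u" and dj: "v = i \<or> v = (i+1) mod (2*m)" using e(2) by (auto simp: Cd_def)
      from dj show ?thesis
      proof
        assume "v = i" then show ?thesis using C uu by simp
      next
        assume "v = (i+1) mod (2*m)"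
        then have "i = (v + 2*m - 1) mod (2*m)" using pred_of_suc[OF C(2)] by simp
        then show ?thesis using C uu by simp
      qed
    qed
  qed
  show "?R \<subseteq> ?L"
  proof
    fix e assume "e \<in> ?R"
    then consider (H) b where "b \<in> {0..<r} - {u}" "e = Hd u b v" | (C1) "e = Cd u v"
      | (C2) "e = Cd u ((v + 2*m - 1) mod (2*m))"
      by blast
    then show "e \<in> ?L"
    proof cases
      case H then show ?thesis unfolding edges_G using u v by (auto simp: Hd_def)
    next
      case C1 then show ?thesis unfolding edges_G using u v by (auto simp: Cd_def)
    next
      case C2
      have "Cd u ((v + 2*m - 1) mod (2*m)) \<in> edges G" unfolding edges_G using u nb_facts(5)[OF v] by blast
      moreover have "(u,v) \<in> Cd u ((v + 2*m - 1) mod (2*m))" using nb_facts(4)[OF v] by (simp add: Cd_def)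
      ultimately show ?thesis using C2 by simp
    qed
  qed
qed

lemma degree_G: assumes "x \<in> V" shows "degree G x = r + 1"
proof -
  obtain u v where x: "x = (u,v)" "u < r" "v < 2*m" using assms by auto
  let ?pm = "(v + 2*m - 1) mod (2*m)"
  let ?A = "(\<lambda>b. Hd u b v) ` ({0..<r} - {u})"
  have injA: "inj_on (\<lambda>b. Hd u b v) ({0..<r} - {u})"
    by (rule inj_onI) (auto simp: Hd_def doubleton_eq_iff)
  have cA: "card ?A = r - 1" using card_image[OF injA] x(2) by simp
  have neq: "Cd u v \<noteq> Cd u ?pm"
  proof
    assume "Cd u v = Cd u ?pm"
    then have "(u, (v+1) mod (2*m)) \<in> Cd u ?pm" by (auto simp: Cd_def)
    then show False using nb_facts[OF x(3)] by (auto simp: Cd_def)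
  qed
  have n1: "Cd u v \<notin> ?A"
  proof
    assume "Cd u v \<in> ?A"
    then obtain b where "Cd u v = Hd u b v" by auto
    then have "(u, (v+1) mod (2*m)) \<in> Hd u b v" by (auto simp: Cd_def)
    then show False using nb_facts[OF x(3)] by (auto simp: Hd_def)
  qed
  have n2: "Cd u ?pm \<notin> ?A"
  proof
    assume "Cd u ?pm \<in> ?A"
    then have "\<exists>b. (u, ?pm) \<in> Hd u b v" by (auto simp: Cd_def)
    then show False using nb_facts[OF x(3)] by (auto simp: Hd_def)
  qed
  have "degree G x = card (?A \<union> {Cd u v, Cd u ?pm})"
    unfolding degree_def using inc_eq[OF x(2,3)] x(1) by simp
  also have "\<dots> = card ?A + card {Cd u v, Cd u ?pm}"
    by (rule card_Un_disjoint) (use n1 n2 in auto)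
  also have "\<dots> = r + 1" using cA neq x(2) by simp
  finally show ?thesis .
qed

lemma max_degree_G: "max_degree G = r + 1"
proof -
  have "degree G ` verts G = (\<lambda>x. r+1) ` verts G" using degree_G verts_G by simp
  also have "\<dots> = {r+1}" by (rule image_constant[of "(0,0)"]) (use verts_G r3 m2 in auto)
  finally have "degree G ` verts G = {r+1}" .
  then show ?thesis unfolding max_degree_def by simp
qed

lemma lower: assumes "matching_book_embedding G k pos pg" shows "r + 2 \<le> k"
proof (rule ccontr)
  assume "\<not> r + 2 \<le> k"
  then have kle: "k \<le> r + 1" by simp
  have mm: "inj_on pos (verts G) \<and> (\<forall>e\<in>edges G. pg e < k) \<and> (\<forall>e \<in> edges G. \<forall>e' \<in> edges G. \<forall>u v x y.
        pg e = pg e' \<and> e = {u, v} \<and> e' = {x, y} \<longrightarrow>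
        \<not> (pos u < pos x \<and> pos x < pos v \<and> pos v < pos y)) \<and>
     (\<forall>e\<in>edges G. \<forall>e'\<in>edges G. e \<noteq> e' \<and> pg e = pg e' \<longrightarrow> e \<inter> e' = {})"
    using assms unfolding matching_book_embedding_def .
  have inj: "inj_on pos (verts G)" using mm by (rule conjunct1)
  have pgk: "\<forall>e\<in>edges G. pg e < k" using mm by (elim conjE)
  have match0: "\<forall>e\<in>edges G. \<forall>e'\<in>edges G. e \<noteq> e' \<and> pg e = pg e' \<longrightarrow> e \<inter> e' = {}"
    using mm by (elim conjE)
  have match: "\<And>e e'. e \<in> edges G \<Longrightarrow> e' \<in> edges G \<Longrightarrow> e \<noteq> e' \<Longrightarrow> pg e = pg e' \<Longrightarrow> e \<inter> e' = {}"
    using match0 by blast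
  have cover: "\<forall>x\<in>verts G. \<exists>e\<in>edges G. x \<in> e \<and> pg e = p" if p: "p < k" for p
  proof
    fix x assume xV: "x \<in> verts G"
    let ?I = "{e \<in> edges G. x \<in> e}"
    have cI: "card ?I = r + 1" using degree_G xV verts_G unfolding degree_def by simp
    have injI: "inj_on pg ?I"
    proof (rule inj_onI)
      fix e e' assume "e \<in> ?I" "e' \<in> ?I" "pg e = pg e'"
      then show "e = e'" using match by blast
    qed
    have sub: "pg ` ?I \<subseteq> {0..<k}" using pgk by auto
    have "card (pg ` ?I) = r + 1" using card_image[OF injI] cI by simp
    moreover have "card (pg ` ?I) \<le> k" using card_mono[OF _ sub] by simp
    ultimately have "card (pg ` ?I) = card {0..<k}" using kle by simp
    then have "pg ` ?I = {0..<k}" using card_subset_eq[OF _ sub] by simp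
    then have "p \<in> pg ` ?I" using p by simp
    then show "\<exists>e\<in>edges G. x \<in> e \<and> pg e = p" by auto
  qed
  have two: "\<forall>e\<in>edges G. \<exists>c d. c \<noteq> d \<and> c \<in> verts G \<and> d \<in> verts G \<and> e = {c,d}"
  proof
    fix e assume "e \<in> edges G"
    then consider (H) a b v where "a < r" "b < r" "a \<noteq> b" "v < 2*m" "e = Hd a b v"
      | (C) u i where "u < r" "i < 2*m" "e = Cd u i" unfolding edges_G by blast
    then show "\<exists>c d. c \<noteq> d \<and> c \<in> verts G \<and> d \<in> verts G \<and> e = {c,d}"
    proof cases
      case H
      have "(a,v) \<noteq> (b,v)" "(a,v) \<in> verts G" "(b,v) \<in> verts G" "e = {(a,v),(b,v)}"
        using H verts_G by (auto simp: Hd_def)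
      then show ?thesis by blast
    next
      case C
      have "(i+1) mod (2*m) \<noteq> i" "(i+1) mod (2*m) < 2*m" using nb_facts[OF C(2)] m2 by auto
      then have "(u,i) \<noteq> (u,(i+1) mod (2*m))" "(u,i) \<in> verts G" "(u,(i+1) mod (2*m)) \<in> verts G"
        "e = {(u,i),(u,(i+1) mod (2*m))}"
        using C verts_G by (auto simp: Cd_def)
      then show ?thesis by blast
    qed
  qed
  have fin: "finite (verts G)" unfolding verts_G by simp
  define rk where "rk w = card {y\<in>verts G. pos y < pos w}" for w
  have par: "odd (rk (a,0) + rk (b,0))" if ab: "a < r" "b < r" "a \<noteq> b" for a b
  proof -
    have "Hd a b 0 \<in> edges G" unfolding edges_G using ab m2
      by (intro disjI1 exI[of _ a] exI[of _ b] exI[of _ 0]) auto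
    then have e: "{(a,0),(b,0)} \<in> edges G" by (simp add: Hd_def)
    have e': "{(b,0),(a,0)} \<in> edges G" using e by (simp add: insert_commute)
    have V: "(a,0) \<in> verts G" "(b,0) \<in> verts G" using ab m2 verts_G by auto
    have pk: "pg {(a,0),(b,0)} < k" using pgk e by blast
    have "pos (a,0) \<noteq> pos (b,0)" using inj V ab(3) by (auto dest: inj_onD)
    then consider "pos (a,0) < pos (b,0)" | "pos (b,0) < pos (a,0)" by linarith
    then show ?thesis
    proof cases
      case 1
      show ?thesis using parity_gen[OF fin two assms _ e 1 V] cover[OF pk]
        unfolding rk_def by blast
    next
      case 2
      have "odd (rk (b,0) + rk (a,0))" using parity_gen[OF fin two assms _ e' 2 V(2,1)] cover[OF pk]
        unfolding rk_def by (simp add: insert_commute)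
      then show ?thesis by (simp add: add.commute)
    qed
  qed
  have "odd (rk (0,0) + rk (1,0))" "odd (rk (1,0) + rk (2,0))" "odd (rk (0,0) + rk (2,0))"
    using par r3 by auto
  then show False by presburger
qed

lemma mbt_G: "mbt G = r + 2"
  unfolding mbt_def
proof (rule Least_equality)
  show "\<exists>pos pg. matching_book_embedding G (r + 2) pos pg" using emb by blast
  show "\<And>y. \<exists>pos pg. matching_book_embedding G y pos pg \<Longrightarrow> r + 2 \<le> y" using lower by blast
qed

end

theorem lemma2p6:
  fixes n m :: nat
  assumes "n \<ge> 2" and "m \<ge> 2"
  shows "mbt (complete_graph (2*n) \<box> cycle_graph (2*m))
           = max_degree (complete_graph (2*n) \<box> cycle_graph (2*m)) + 1
         \<and> max_degree (complete_graph (2*n) \<box> cycle_graph (2*m)) + 1 = 2*n + 2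
         \<and> mbt (complete_graph (2*n+1) \<box> cycle_graph (2*m))
           = max_degree (complete_graph (2*n+1) \<box> cycle_graph (2*m)) + 1
         \<and> max_degree (complete_graph (2*n+1) \<box> cycle_graph (2*m)) + 1 = 2*n + 3"
proof -
  interpret K1: KC "2*n" m using assms by unfold_locales auto
  interpret K2: KC "2*n+1" m using assms by unfold_locales auto
  show ?thesis using K1.mbt_G K1.max_degree_G K2.mbt_G K2.max_degree_G by simp
qed

end
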